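(* Let $u_o>0$, $\alpha_1,\alpha_2\in\mathbb{R}$, and let $\boldsymbol{u}(x,t)=(u_1,u_2)^T$ be a smooth $\mathbb{C}^2$-valued function. Fix $z\in\mathbb{C}\setminus\{0\}$ and put $k=\frac12\left(z-\frac{u_o^2}{z}\right)$, $\lambda=\frac12\left(z+\frac{u_o^2}{z}\right)$. Suppose $\boldsymbol{\nu}_1(x,t)$ and $\boldsymbol{\nu}_2(x,t)$ are any two $\mathbb{C}^3$-valued solutions of the adjoint Lax system $$\tilde{\boldsymbol{\varphi}}_x=\tilde{\boldsymbol{X}}\tilde{\boldsymbol{\varphi}},\qquad \tilde{\boldsymbol{\varphi}}_t=\tilde{\boldsymbol{T}}\tilde{\boldsymbol{\varphi}}.$$ Then $$\boldsymbol{\nu}(x,t)=e^{ih_2(z,x,t)}\left[\boldsymbol{\nu}_1(x,t)\times\boldsymbol{\nu}_2(x,t)\right]$$ is a solution of the Lax system $\boldsymbol{\varphi}_x=\boldsymbol{X}\boldsymbol{\varphi}$, $\boldsymbol{\varphi}_t=\boldsymbol{T}\boldsymbol{\varphi}$.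
   Context: Notation. $\times$ denotes the (bilinear, unconjugated) cross product on $\mathbb{C}^3$, $\dagger$ denotes the conjugate transpose, and $^*$ denotes complex conjugation. Matrices. Set $$\boldsymbol{U}=\begin{pmatrix}0&-\boldsymbol{u}^\dagger\\ \boldsymbol{u}&0_{2\times2}\end{pmatrix},\qquad \boldsymbol{\sigma}=\mathrm{diag}(1,-1,-1).$$ Lax pair (here $\boldsymbol{U}_x=\partial_x\boldsymbol{U}$, etc.): $$\boldsymbol{X}=-ik\boldsymbol{\sigma}+\boldsymbol{U},$$ $$\boldsymbol{T}=\alpha_1\left[2ik^2\boldsymbol{\sigma}-2k\boldsymbol{U}+i\boldsymbol{\sigma}\left(\boldsymbol{U}^2+u_o^2-\boldsymbol{U}_x\right)\right]+\alpha_2\left[-4ik^3\boldsymbol{\sigma}+4k^2\boldsymbol{U}+2ik\boldsymbol{\sigma}\left(\boldsymbol{U}_x-\boldsymbol{U}^2\right)-\boldsymbol{U}\boldsymbol{U}_x+\boldsymbol{U}_x\boldsymbol{U}-\boldsymbol{U}_{xx}+2\boldsymbol{U}^3\right].$$ Adjoint Lax pair: $$\tilde{\boldsymbol{X}}=ik\boldsymbol{\sigma}+\boldsymbol{U}^*,$$ $$\tilde{\boldsymbol{T}}=\alpha_1\left[-2ik^2\boldsymbol{\sigma}-2k\boldsymbol{U}^*-i\boldsymbol{\sigma}\left((\boldsymbol{U}^* )^2+u_o^2-\boldsymbol{U}_x^*\right)\right]+\alpha_2\left[4ik^3\boldsymbol{\sigma}+4k^2\boldsymbol{U}^*-2ik\boldsymbol{\sigma}\left(\boldsymbol{U}_x^*-(\boldsymbol{U}^*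 )^2\right)+\boldsymbol{U}_x^*\boldsymbol{U}^*-\boldsymbol{U}^*\boldsymbol{U}_x^*-\boldsymbol{U}_{xx}^*+2(\boldsymbol{U}^* )^3\right].$$ Phase function: $$h_2(z,x,t)=kx-\left[\alpha_1(k^2+\lambda^2)-4\alpha_2k^3\right]t.$$ *)

theory Defs
  imports "HOL-Analysis.Analysis"
begin

definition ccross :: "complex^3 \<Rightarrow> complex^3 \<Rightarrow> complex^3" where
  "ccross a b = vector [a$2 * b$3 - a$3 * b$2, a$3 * b$1 - a$1 * b$3, a$1 * b$2 - a$2 * b$1]"

definition vsc :: "complex \<Rightarrow> complex^3 \<Rightarrow> complex^3" where
  "vsc c v = (\<chi> i. c * v$i)"

definition msc :: "complex \<Rightarrow> complex^3^3 \<Rightarrow> complex^3^3" where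
  "msc c A = (\<chi> i j. c * A$i$j)"

definition mcnj :: "complex^3^3 \<Rightarrow> complex^3^3" where
  "mcnj A = (\<chi> i j. cnj (A$i$j))"

definition sigma :: "complex^3^3" where
  "sigma = (\<chi> i j. if i = j then (if i = 1 then 1 else -1) else 0)"

text \<open>The matrix U = [[0, -u^dagger],[u, 0]] built from u = (u1,u2).\<close>
definition Umat :: "complex^2 \<Rightarrow> complex^3^3" where
  "Umat u = (\<chi> i j.
      if i = 1 \<and> j = 2 then - cnj (u$1)
      else if i = 1 \<and> j = 3 then - cnj (u$2)
      else if i = 2 \<and> j = 1 then u$1
      else if i = 3 \<and> j = 1 then u$2
      else 0)"

definition Xmat :: "complex \<Rightarrow> complex^3^3 \<Rightarrow> complex^3^3" where
  "Xmat k U = msc (-\<i> * k) sigma + U"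

definition Tmat :: "real \<Rightarrow> real \<Rightarrow> real \<Rightarrow> complex \<Rightarrow> complex^3^3 \<Rightarrow> complex^3^3 \<Rightarrow> complex^3^3
                     \<Rightarrow> complex^3^3" where
  "Tmat a1 a2 uo k U Ux Uxx =
     msc (complex_of_real a1)
       (msc (2 * \<i> * k^2) sigma - msc (2 * k) U
        + msc \<i> (sigma ** (U ** U + mat (complex_of_real (uo^2)) - Ux)))
   + msc (complex_of_real a2)
       (msc (-4 * \<i> * k^3) sigma + msc (4 * k^2) U
        + msc (2 * \<i> * k) (sigma ** (Ux - U ** U))
        - U ** Ux + Ux ** U - Uxx + msc 2 (U ** U ** U))"

definition Xadj :: "complex \<Rightarrow> complex^3^3 \<Rightarrow> complex^3^3" where
  "Xadj k U = msc (\<i> * k) sigma + mcnj U"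

definition Tadj :: "real \<Rightarrow> real \<Rightarrow> real \<Rightarrow> complex \<Rightarrow> complex^3^3 \<Rightarrow> complex^3^3 \<Rightarrow> complex^3^3
                     \<Rightarrow> complex^3^3" where
  "Tadj a1 a2 uo k U Ux Uxx =
     (let Us = mcnj U; Uxs = mcnj Ux; Uxxs = mcnj Uxx in
     msc (complex_of_real a1)
       (msc (-2 * \<i> * k^2) sigma - msc (2 * k) Us
        - msc \<i> (sigma ** (Us ** Us + mat (complex_of_real (uo^2)) - Uxs)))
   + msc (complex_of_real a2)
       (msc (4 * \<i> * k^3) sigma + msc (4 * k^2) Us
        - msc (2 * \<i> * k) (sigma ** (Uxs - Us ** Us))
        + Uxs ** Us - Us ** Uxs - Uxxs + msc 2 (Us ** Us ** Us)))"

definition h2 :: "real \<Rightarrow> real \<Rightarrow> complex \<Rightarrow> complex \<Rightarrow> real \<Rightarrow> real \<Rightarrow> complex" where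
  "h2 a1 a2 k lam x t = k * of_real x - (of_real a1 * (k^2 + lam^2) - 4 * of_real a2 * k^3) * of_real t"

end

theory Submission
  imports Defs
begin



lemma vd_comp:
  fixes f :: "real \<Rightarrow> complex^3"
  assumes "\<And>i. ((\<lambda>y. f y $ i) has_vector_derivative f' $ i) (at x)"
  shows "(f has_vector_derivative f') (at x)"
proof -
  have "((\<lambda>y. ((f y - f x) - (y - x) *\<^sub>R f') /\<^sub>R norm (y - x)) \<longlongrightarrow> 0) (at x)"
  proof (rule vec_tendstoI)
    fix i
    have "((\<lambda>y. ((f y $ i - f x $ i) - (y - x) *\<^sub>R f' $ i) /\<^sub>R norm (y - x)) \<longlongrightarrow> 0) (at x)"
      using assms[of i] unfolding has_vector_derivative_def has_derivative_def Lim_ident_at by simp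
    then show "((\<lambda>y. (((f y - f x) - (y - x) *\<^sub>R f') /\<^sub>R norm (y - x)) $ i) \<longlongrightarrow> 0 $ i) (at x)"
      by simp
  qed
  then show ?thesis unfolding has_vector_derivative_def has_derivative_def Lim_ident_at
    by (simp add: bounded_linear_scaleR_left)
qed

lemma vd_nth:
  fixes f :: "real \<Rightarrow> complex^3"
  assumes "(f has_vector_derivative f') (at x)"
  shows "((\<lambda>y. f y $ i) has_vector_derivative f' $ i) (at x)"
  using bounded_linear.has_vector_derivative[OF bounded_linear_vec_nth assms] by simp

lemma key_deriv:
  fixes f g :: "real \<Rightarrow> complex^3" and E :: "real \<Rightarrow> complex"
  assumes E: "(E has_vector_derivative E') (at x)"
    and f: "(f has_vector_derivative f') (at x)"
    and g: "(g has_vector_derivative g') (at x)"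
  shows "((\<lambda>y. vsc (E y) (ccross (f y) (g y))) has_vector_derivative
     vsc E' (ccross (f x) (g x)) + vsc (E x) (ccross f' (g x) + ccross (f x) g')) (at x)"
proof (rule vd_comp)
  fix i :: 3
  note f1 = vd_nth[OF f, of 1] and f2 = vd_nth[OF f, of 2] and f3 = vd_nth[OF f, of 3]
  note g1 = vd_nth[OF g, of 1] and g2 = vd_nth[OF g, of 2] and g3 = vd_nth[OF g, of 3]
  show "((\<lambda>y. vsc (E y) (ccross (f y) (g y)) $ i) has_vector_derivative
     (vsc E' (ccross (f x) (g x)) + vsc (E x) (ccross f' (g x) + ccross (f x) g')) $ i) (at x)"
    using exhaust_3[of i]
    apply (elim disjE)
    apply (simp_all add: vsc_def ccross_def)
    apply (rule derivative_eq_intros E f1 f2 f3 g1 g2 g3 refl | simp add: algebra_simps)+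
    done
qed

lemma E_deriv_x: "((\<lambda>y. exp (\<i> * h2 a1 a2 k lam y t)) has_vector_derivative
   (\<i> * k) * exp (\<i> * h2 a1 a2 k lam x t)) (at x)"
proof -
  have "((\<lambda>y. \<i> * h2 a1 a2 k lam y t) has_vector_derivative \<i> * k) (at x)"
    unfolding h2_def
    by (rule derivative_eq_intros refl | simp)+
  from field_vector_diff_chain_at[OF this DERIV_exp]
  show ?thesis by (simp add: o_def)
qed

lemma E_deriv_t: "((\<lambda>s. exp (\<i> * h2 a1 a2 k lam x s)) has_vector_derivative
   (-\<i> * (of_real a1 * (k^2 + lam^2) - 4 * of_real a2 * k^3)) * exp (\<i> * h2 a1 a2 k lam x t)) (at t)"
proof -
  have "((\<lambda>s. \<i> * h2 a1 a2 k lam x s) has_vector_derivative -\<i> * (of_real a1 * (k^2 + lam^2) - 4 * of_real a2 * k^3)) (at t)"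
    unfolding h2_def
    by (rule derivative_eq_intros refl | simp add: algebra_simps)+
  from field_vector_diff_chain_at[OF this DERIV_exp]
  show ?thesis by (simp add: o_def)
qed


lemma cross_lin: "ccross (M *v a) b + ccross a (M *v b) =
   vsc (M$1$1 + M$2$2 + M$3$3) (ccross a b) - transpose M *v ccross a b"
  by (simp add: vec_eq_iff forall_3 ccross_def vsc_def matrix_vector_mult_def sum_3 transpose_def algebra_simps)

lemma X_alg: "Xmat k (Umat u) *v w = vsc (\<i>*k) w + vsc ((Xadj k (Umat u))$1$1 + (Xadj k (Umat u))$2$2 + (Xadj k (Umat u))$3$3) w - transpose (Xadj k (Umat u)) *v w"
  by (simp add: vec_eq_iff forall_3 Xmat_def Xadj_def Umat_def mcnj_def msc_def sigma_def vsc_def matrix_vector_mult_def sum_3 transpose_def algebra_simps)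

lemma T_alg: assumes "lam^2 = k^2 + complex_of_real (uo^2)"
 shows "Tmat a1 a2 uo k (Umat u) (Umat v) (Umat w) *v y = vsc (-\<i> * (of_real a1 * (k^2 + lam^2) - 4 * of_real a2 * k^3)) y
   + vsc ((Tadj a1 a2 uo k (Umat u) (Umat v) (Umat w))$1$1 + (Tadj a1 a2 uo k (Umat u) (Umat v) (Umat w))$2$2 + (Tadj a1 a2 uo k (Umat u) (Umat v) (Umat w))$3$3) y
   - transpose (Tadj a1 a2 uo k (Umat u) (Umat v) (Umat w)) *v y"
  unfolding assms
  by (simp add: vec_eq_iff forall_3 Tmat_def Tadj_def Let_def Umat_def mcnj_def msc_def sigma_def vsc_def matrix_vector_mult_def
     matrix_matrix_mult_def mat_def sum_3 transpose_def algebra_simps power2_eq_square power3_eq_cube)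

lemma mv_vsc: "M *v vsc c w = vsc c (M *v w)"
  by (simp add: vec_eq_iff vsc_def matrix_vector_mult_def sum_distrib_left algebra_simps)

lemma final_eq: "vsc (c * E) w + vsc E (vsc tr w - N *v w) = vsc E (vsc c w + vsc tr w - N *v w)"
  by (simp add: vec_eq_iff vsc_def algebra_simps)

theorem proposition3:
  fixes uo a1 a2 :: real and z k lam :: complex
    and u ux uxx :: "real \<Rightarrow> real \<Rightarrow> complex^2"
    and \<nu>1 \<nu>2 \<nu> :: "real \<Rightarrow> real \<Rightarrow> complex^3"
  assumes uo_pos: "uo > 0"
    and z_nz: "z \<noteq> 0"
    and u_x: "\<And>x t. ((\<lambda>y. u y t) has_vector_derivative ux x t) (at x)"
    and u_xx: "\<And>x t. ((\<lambda>y. ux y t) has_vector_derivative uxx x t) (at x)"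
    and k_def: "k = (z - of_real (uo^2) / z) / 2"
    and lam_def: "lam = (z + of_real (uo^2) / z) / 2"
    and nu1_x: "\<And>x t. ((\<lambda>y. \<nu>1 y t) has_vector_derivative
                   (Xadj k (Umat (u x t)) *v \<nu>1 x t)) (at x)"
    and nu1_t: "\<And>x t. ((\<lambda>s. \<nu>1 x s) has_vector_derivative
                   (Tadj a1 a2 uo k (Umat (u x t)) (Umat (ux x t)) (Umat (uxx x t)) *v \<nu>1 x t)) (at t)"
    and nu2_x: "\<And>x t. ((\<lambda>y. \<nu>2 y t) has_vector_derivative
                   (Xadj k (Umat (u x t)) *v \<nu>2 x t)) (at x)"
    and nu2_t: "\<And>x t. ((\<lambda>s. \<nu>2 x s) has_vector_derivative
                   (Tadj a1 a2 uo k (Umat (u x t)) (Umat (ux x t)) (Umat (uxx x t)) *v \<nu>2 x t)) (at t)"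
    and nu_def: "\<And>x t. \<nu> x t = vsc (exp (\<i> * h2 a1 a2 k lam x t)) (ccross (\<nu>1 x t) (\<nu>2 x t))"
  shows "(\<forall>x t. ((\<lambda>y. \<nu> y t) has_vector_derivative (Xmat k (Umat (u x t)) *v \<nu> x t)) (at x)) \<and>
         (\<forall>x t. ((\<lambda>s. \<nu> x s) has_vector_derivative
                   (Tmat a1 a2 uo k (Umat (u x t)) (Umat (ux x t)) (Umat (uxx x t)) *v \<nu> x t)) (at t))"
proof -
  have lam2: "lam^2 = k^2 + complex_of_real (uo^2)"
    unfolding k_def lam_def using z_nz by (simp add: field_simps power2_eq_square)
  have A: "((\<lambda>y. \<nu> y t) has_vector_derivative (Xmat k (Umat (u x t)) *v \<nu> x t)) (at x)" for x t
  proof -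
    note D = key_deriv[OF E_deriv_x[of a1 a2 k lam t x] nu1_x[where x=x and t=t] nu2_x[where x=x and t=t]]
    show ?thesis
      unfolding nu_def using D
      by (simp only: cross_lin X_alg mv_vsc final_eq)
  qed
  have B: "((\<lambda>s. \<nu> x s) has_vector_derivative
                   (Tmat a1 a2 uo k (Umat (u x t)) (Umat (ux x t)) (Umat (uxx x t)) *v \<nu> x t)) (at t)" for x t
  proof -
    note D = key_deriv[OF E_deriv_t[of a1 a2 k lam x t] nu1_t[where x=x and t=t] nu2_t[where x=x and t=t]]
    show ?thesis
      unfolding nu_def using D
      by (simp only: cross_lin T_alg[OF lam2] mv_vsc final_eq)
  qed
  show ?thesis using A B by blast
qed

end
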